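(* Let $c=\min_{x\in\partial D}\phi(x;p,p')$ (so $c>|p-p'|$), fix $0<s<\eta'$, let $q\in\Lambda_{\partial D}(p,p')$ and $A'=\frac{q-p'}{|q-p'|}$. Then $\Lambda_{\partial D}(p,p'+sA')=\{q\}$. Moreover, if in addition $s<\frac12(c-|p-p'|)$, then $S_q\big(E_{c-s}(p,p'+sA')\big)-S_q(\partial D)$ is positive definite on the common tangent plane $T_q(\partial D)=T_q(E_{c-s}(p,p'+sA'))=T_q(E_c(p,p'))$.
   Context: Let $D\subset\mathbb R^3$ be a nonempty bounded open set with $C^2$ boundary; $\nu_q$ is the unit outward normal. $p,p'\in\mathbb R^3\setminus\overline D$ with $[p,p']\cap\overline D=\emptyset$; $B'$ is the open ball with center $p'$ and radius $\eta'$, $\overline{B'}\cap\overline D=\emptyset$. $\phi(x;y,y')=|y-x|+|x-y'|$; $E_c(p,p')=\{x:\phi(x;p,p')=c\}$; $\Lambda_{\partial D}(p,p')=\{q\in\partial D:\phi(q;p,p')=\min_{x\in\partial D}\phi(x;p,p')\}$. Shape operators $S_q(\cdot)$ are taken at $q$ with respect to $\nu_q$ ($S_q(v)=-D_vN$). *)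

theory Defs
  imports "HOL-Analysis.Analysis"
begin

definition phi :: "real^3 \<Rightarrow> real^3 \<Rightarrow> real^3 \<Rightarrow> real" where
  "phi x y y' = norm (y - x) + norm (x - y')"

definition ellipsoid :: "real \<Rightarrow> real^3 \<Rightarrow> real^3 \<Rightarrow> (real^3) set" where
  "ellipsoid c p p' = {x. phi x p p' = c}"

definition Lambda :: "(real^3) set \<Rightarrow> real^3 \<Rightarrow> real^3 \<Rightarrow> (real^3) set" where
  "Lambda D p p' = {q \<in> frontier D. \<forall>x \<in> frontier D. phi q p p' \<le> phi x p p'}"

definition grad :: "(real^3 \<Rightarrow> real) \<Rightarrow> real^3 \<Rightarrow> real^3" where
  "grad F x = (\<chi> i. frechet_derivative F (at x) (axis i 1))"

definition C2_on :: "(real^3) set \<Rightarrow> (real^3 \<Rightarrow> real) \<Rightarrow> bool" where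
  "C2_on U F \<longleftrightarrow> (\<exists>g H. (\<forall>x\<in>U. (F has_derivative (\<lambda>h. g x \<bullet> h)) (at x) \<and>
                                 (g has_derivative (\<lambda>h. H x *v h)) (at x))
                        \<and> continuous_on U H)"

definition local_defining_function ::
  "(real^3) set \<Rightarrow> real^3 \<Rightarrow> (real^3) set \<Rightarrow> (real^3 \<Rightarrow> real) \<Rightarrow> bool" where
  "local_defining_function D q U \<rho> \<longleftrightarrow>
     open U \<and> q \<in> U \<and> C2_on U \<rho> \<and> (\<forall>x\<in>U. grad \<rho> x \<noteq> 0) \<and>
     D \<inter> U = {x\<in>U. \<rho> x < 0} \<and> frontier D \<inter> U = {x\<in>U. \<rho> x = 0}"

definition C2_boundary :: "(real^3) set \<Rightarrow> bool" where
  "C2_boundary D \<longleftrightarrow> (\<forall>q\<in>frontier D. \<exists>U \<rho>. local_defining_function D q U \<rho>)"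

definition outward_normal :: "(real^3 \<Rightarrow> real) \<Rightarrow> real^3 \<Rightarrow> real^3" where
  "outward_normal \<rho> q = grad \<rho> q /\<^sub>R norm (grad \<rho> q)"

definition tangent_plane :: "(real^3 \<Rightarrow> real) \<Rightarrow> real^3 \<Rightarrow> (real^3) set" where
  "tangent_plane F q = {v. grad F q \<bullet> v = 0}"

text \<open>Shape operator at q of the level surface {F = F q}, taken with respect to the unit
  normal n at q: N is the unit normal field +-grad F/|grad F| oriented so that N(q) is
  on the side of n, and S_q(v) = - D_v N.\<close>
definition shape_operator :: "(real^3 \<Rightarrow> real) \<Rightarrow> real^3 \<Rightarrow> real^3 \<Rightarrow> real^3 \<Rightarrow> real^3" where
  "shape_operator F n q v =
     - frechet_derivative (\<lambda>x. sgn (grad F q \<bullet> n) *\<^sub>R (grad F x /\<^sub>R norm (grad F x))) (at q) v"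

end

theory Submission
  imports Defs
begin



lemma grad_eq:
  assumes "(F has_derivative (\<lambda>h. G \<bullet> h)) (at x)"
  shows "grad F x = G"
proof -
  have "frechet_derivative F (at x) = (\<lambda>h. G \<bullet> h)"
    using frechet_derivative_at[OF assms] by simp
  then show ?thesis unfolding grad_def by (simp add: vec_eq_iff inner_axis)
qed

lemma norm_diff_deriv:
  fixes a x :: "real^3"
  assumes "x \<noteq> a"
  shows "((\<lambda>x. norm (x - a)) has_derivative (\<lambda>h. ((x - a) /\<^sub>R norm (x - a)) \<bullet> h)) (at x)"
proof -
  have "x - a \<noteq> 0" using assms by simp
  have 1: "((\<lambda>x. x - a) has_derivative (\<lambda>h. h)) (at x)"
    by (auto intro!: derivative_eq_intros)
  have 2: "(norm has_derivative (\<lambda>h. sgn (x - a) \<bullet> h)) (at (x - a))"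
    using has_derivative_norm[OF \<open>x - a \<noteq> 0\<close>] by (simp add: inner_commute)
  have "((\<lambda>x. norm (x - a)) has_derivative (\<lambda>h. sgn (x - a) \<bullet> h)) (at x)"
    using has_derivative_compose[OF 1 2] by (simp add: o_def)
  then show ?thesis by (simp add: sgn_div_norm)
qed

lemma normalized_deriv:
  fixes G :: "real^3 \<Rightarrow> real^3"
  assumes G: "(G has_derivative G') (at q)" and nz: "G q \<noteq> 0"
  shows "((\<lambda>x. \<sigma> *\<^sub>R (G x /\<^sub>R norm (G x))) has_derivative
     (\<lambda>h. \<sigma> *\<^sub>R (inverse (norm (G q)) *\<^sub>R G' h
        + (- (inverse (norm (G q)) * (sgn (G q) \<bullet> G' h) * inverse (norm (G q)))) *\<^sub>R G q))) (at q)"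
proof -
  have 2: "(norm has_derivative (\<lambda>h. sgn (G q) \<bullet> h)) (at (G q))"
    using has_derivative_norm[OF nz] by (simp add: inner_commute)
  have N: "((\<lambda>x. norm (G x)) has_derivative (\<lambda>h. sgn (G q) \<bullet> G' h)) (at q)"
    using has_derivative_compose[OF G 2] by (simp add: o_def)
  have nn: "norm (G q) \<noteq> 0" using nz by simp
  have I: "((\<lambda>x. inverse (norm (G x))) has_derivative
      (\<lambda>h. - (inverse (norm (G q)) * (sgn (G q) \<bullet> G' h) * inverse (norm (G q))))) (at q)"
    using Deriv.has_derivative_inverse[OF nn N] .
  have "((\<lambda>x. inverse (norm (G x)) *\<^sub>R G x) has_derivative
     (\<lambda>h. inverse (norm (G q)) *\<^sub>R G' h + (- (inverse (norm (G q)) * (sgn (G q) \<bullet> G' h) * inverse (norm (G q)))) *\<^sub>R G q)) (at q)"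
    using has_derivative_scaleR[OF I G] by simp
  from has_derivative_scaleR_right[OF this, of \<sigma>] show ?thesis by (simp add: divide_inverse_commute)
qed

lemma normalized_deriv_inner:
  fixes G :: "real^3 \<Rightarrow> real^3"
  assumes G: "(G has_derivative G') (at q)" and nz: "G q \<noteq> 0" and v: "G q \<bullet> v = 0"
  shows "frechet_derivative (\<lambda>x. \<sigma> *\<^sub>R (G x /\<^sub>R norm (G x))) (at q) v \<bullet> v
       = \<sigma> * (G' v \<bullet> v) / norm (G q)"
proof -
  have "frechet_derivative (\<lambda>x. \<sigma> *\<^sub>R (G x /\<^sub>R norm (G x))) (at q) v =
     \<sigma> *\<^sub>R (inverse (norm (G q)) *\<^sub>R G' v
        + (- (inverse (norm (G q)) * (sgn (G q) \<bullet> G' v) * inverse (norm (G q)))) *\<^sub>R G q)"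
    unfolding frechet_derivative_at[OF normalized_deriv[OF G nz, of \<sigma>], symmetric] by (rule refl)
  then show ?thesis using v by (simp add: inner_add_left inner_diff_left divide_inverse_commute)
qed




lemma curve_decrease:
  fixes \<rho> :: "real^3 \<Rightarrow> real" and G :: "real^3 \<Rightarrow> real^3"
  assumes U: "open U" "q \<in> U"
   and d\<rho>: "\<forall>x\<in>U. (\<rho> has_derivative (\<lambda>h. G x \<bullet> h)) (at x)"
   and dG: "(G has_derivative G') (at q)"
   and tan: "G q \<bullet> v = 0"
   and neg: "G' v \<bullet> v + 2 * k * (G q \<bullet> w) < 0"
  shows "\<exists>\<delta>>0. \<forall>t. 0 < t \<and> t < \<delta> \<longrightarrow> q + t *\<^sub>R v + (t\<^sup>2 * k) *\<^sub>R w \<in> U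
            \<and> \<rho> (q + t *\<^sub>R v + (t\<^sup>2 * k) *\<^sub>R w) < \<rho> q"
proof -
  define \<gamma> where "\<gamma> t = q + t *\<^sub>R v + (t\<^sup>2 * k) *\<^sub>R w" for t :: real
  define f1 where "f1 t = G (\<gamma> t) \<bullet> (v + (2*t*k) *\<^sub>R w)" for t
  have d\<gamma>: "(\<gamma> has_derivative (\<lambda>h. h *\<^sub>R (v + (2*t*k) *\<^sub>R w))) (at t)" for t
    unfolding \<gamma>_def
    by (auto intro!: derivative_eq_intros simp: algebra_simps power2_eq_square)
  have c\<gamma>: "isCont \<gamma> x" for x
    unfolding \<gamma>_def by (intro continuous_intros)
  define T where "T = \<gamma> -` U"
  have "open T" unfolding T_def using continuous_open_vimage[OF _ c\<gamma>] U by auto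
  have "\<gamma> 0 = q" by (simp add: \<gamma>_def)
  then have "0 \<in> T" using U by (simp add: T_def)
  obtain e where e: "e > 0" "ball 0 e \<subseteq> T" using \<open>open T\<close> \<open>0 \<in> T\<close> openE by blast
  have dcomp: "((\<lambda>t. \<rho> (\<gamma> t)) has_derivative (\<lambda>h. h * f1 t)) (at t)" if "t \<in> T" for t
  proof -
    have "\<gamma> t \<in> U" using that T_def by auto
    have "((\<lambda>t. \<rho> (\<gamma> t)) has_derivative (\<lambda>h. G (\<gamma> t) \<bullet> (h *\<^sub>R (v + (2*t*k) *\<^sub>R w)))) (at t)"
      using has_derivative_compose[OF d\<gamma> d\<rho>[rule_format, OF \<open>\<gamma> t \<in> U\<close>]] .
    then show ?thesis by (simp add: f1_def)
  qed
  have lin: "linear G'" using dG has_derivative_linear by blast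
  have dG\<gamma>: "((\<lambda>t. G (\<gamma> t)) has_derivative (\<lambda>h. G' (h *\<^sub>R v))) (at 0)"
    using has_derivative_compose[OF d\<gamma>[of 0], of G G'] dG \<open>\<gamma> 0 = q\<close> by simp
  have dlin: "((\<lambda>t. v + (2*t*k) *\<^sub>R w) has_derivative (\<lambda>h. (2*h*k) *\<^sub>R w)) (at 0)"
    by (auto intro!: derivative_eq_intros simp: algebra_simps)
  have "(f1 has_derivative (\<lambda>h. G (\<gamma> 0) \<bullet> ((2*h*k) *\<^sub>R w) + G' (h *\<^sub>R v) \<bullet> (v + (2*0*k) *\<^sub>R w))) (at 0)"
    unfolding f1_def using has_derivative_inner[OF dG\<gamma> dlin] .
  moreover have "(\<lambda>h. G (\<gamma> 0) \<bullet> ((2*h*k) *\<^sub>R w) + G' (h *\<^sub>R v) \<bullet> (v + (2*0*k) *\<^sub>R w))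
      = (\<lambda>h. h * (G' v \<bullet> v + 2 * k * (G q \<bullet> w)))"
    using \<open>\<gamma> 0 = q\<close> linear.scaleR[OF lin] by (auto simp: algebra_simps)
  ultimately have "(f1 has_derivative (\<lambda>h. h * (G' v \<bullet> v + 2 * k * (G q \<bullet> w)))) (at 0)" by simp
  then have "DERIV f1 0 :> (G' v \<bullet> v + 2 * k * (G q \<bullet> w))"
    unfolding has_field_derivative_def by (simp add: mult.commute[of _ "G' v \<bullet> v + 2 * k * (G q \<bullet> w)"])
  from DERIV_neg_dec_right[OF this neg] obtain d where d: "d > 0" "\<And>h. h > 0 \<Longrightarrow> h < d \<Longrightarrow> f1 (0 + h) < f1 0"
    by blast
  have f10: "f1 0 = 0" using tan \<open>\<gamma> 0 = q\<close> by (simp add: f1_def)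
  show ?thesis
  proof (intro exI[of _ "min d e"] conjI allI impI)
    show "min d e > 0" using d e by simp
    fix t assume t: "0 < t \<and> t < min d e"
    have sub: "x \<in> T" if "0 \<le> x" "x \<le> t" for x
      using e that t by (auto simp: dist_real_def subset_iff)
    then show "q + t *\<^sub>R v + (t\<^sup>2 * k) *\<^sub>R w \<in> U" using t by (auto simp: T_def \<gamma>_def)
    have "\<exists>x\<in>{0<..<t}. \<rho> (\<gamma> t) - \<rho> (\<gamma> 0) = (\<lambda>h. h * f1 x) (t - 0)"
      using t sub by (intro mvt_simple) (auto intro: has_derivative_at_withinI dcomp)
    then obtain z where z: "0 < z" "z < t" "\<rho> (\<gamma> t) - \<rho> q = t * f1 z"
      using \<open>\<gamma> 0 = q\<close> by auto
    have "f1 z < 0" using d(2)[of z] z t f10 by simp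
    then have "t * f1 z < 0" using t by (simp add: mult_pos_neg)
    then show "\<rho> (q + t *\<^sub>R v + (t\<^sup>2 * k) *\<^sub>R w) < \<rho> q" using z by (simp add: \<gamma>_def)
  qed
qed




definition nd :: "real^3 \<Rightarrow> real^3 \<Rightarrow> real^3 \<Rightarrow> real^3" where
  "nd a x h = inverse (norm (x - a)) *\<^sub>R h
     + (- (inverse (norm (x - a)) * (sgn (x - a) \<bullet> h) * inverse (norm (x - a)))) *\<^sub>R (x - a)"

lemma n_deriv:
  fixes a x :: "real^3"
  assumes "x \<noteq> a"
  shows "((\<lambda>x. (x - a) /\<^sub>R norm (x - a)) has_derivative nd a x) (at x)"
proof -
  have 1: "((\<lambda>x. x - a) has_derivative (\<lambda>h. h)) (at x)"
    by (auto intro!: derivative_eq_intros)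
  have "x - a \<noteq> 0" using assms by simp
  from normalized_deriv[OF 1 this, of 1] show ?thesis
    unfolding nd_def[abs_def] by simp
qed

lemma nd_inner:
  fixes a x v A :: "real^3" and r :: real
  assumes "r > 0" "x - a = r *\<^sub>R A" "norm A = 1"
  shows "nd a x v \<bullet> v = (v \<bullet> v - (A \<bullet> v)\<^sup>2) / r"
proof -
  have n: "norm (x - a) = r" using assms by simp
  have sg: "sgn (x - a) = A" using assms by (simp add: sgn_div_norm n)
  have "nd a x v = (1/r) *\<^sub>R v - ((A \<bullet> v)/r) *\<^sub>R A"
    unfolding nd_def n sg using assms(1) by (simp add: assms(2) inner_commute field_simps)
  then have "nd a x v \<bullet> v = (1/r) * (v \<bullet> v) - ((A \<bullet> v)/r) * (A \<bullet> v)"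
    by (simp add: inner_diff_left)
  then show ?thesis using assms(1) by (simp add: field_simps power2_eq_square)
qed

lemma phi_deriv:
  fixes x y y' :: "real^3"
  assumes "x \<noteq> y" "x \<noteq> y'"
  shows "((\<lambda>x. phi x y y') has_derivative
     (\<lambda>h. ((x - y) /\<^sub>R norm (x - y) + (x - y') /\<^sub>R norm (x - y')) \<bullet> h)) (at x)"
proof -
  have e: "(\<lambda>x. phi x y y') = (\<lambda>x. norm (x - y) + norm (x - y'))"
    by (auto simp: phi_def norm_minus_commute)
  show ?thesis unfolding e
    using has_derivative_add[OF norm_diff_deriv[OF assms(1)] norm_diff_deriv[OF assms(2)]]
    by (simp add: inner_add_left)
qed

lemma ngrad_deriv:
  fixes x y y' :: "real^3"
  assumes "x \<noteq> y" "x \<noteq> y'"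
  shows "((\<lambda>x. (x - y) /\<^sub>R norm (x - y) + (x - y') /\<^sub>R norm (x - y')) has_derivative
     (\<lambda>h. nd y x h + nd y' x h)) (at x)"
  using has_derivative_add[OF n_deriv[OF assms(1)] n_deriv[OF assms(2)]] .

lemma normalized_deriv_inner':
  fixes G K :: "real^3 \<Rightarrow> real^3"
  assumes G: "(G has_derivative G') (at q)" and nz: "G q \<noteq> 0" and v: "G q \<bullet> v = 0"
    and W: "open W" "q \<in> W" "\<forall>x\<in>W. K x = G x"
  shows "frechet_derivative (\<lambda>x. \<sigma> *\<^sub>R (K x /\<^sub>R norm (K x))) (at q) v \<bullet> v
       = \<sigma> * (G' v \<bullet> v) / norm (G q)"
proof -
  have d: "((\<lambda>x. \<sigma> *\<^sub>R (K x /\<^sub>R norm (K x))) has_derivative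
     (\<lambda>h. \<sigma> *\<^sub>R (inverse (norm (G q)) *\<^sub>R G' h
        + (- (inverse (norm (G q)) * (sgn (G q) \<bullet> G' h) * inverse (norm (G q)))) *\<^sub>R G q))) (at q)"
    by (rule has_derivative_transform_within_open[OF normalized_deriv[OF G nz] W(1,2)]) (use W in auto)
  have "frechet_derivative (\<lambda>x. \<sigma> *\<^sub>R (K x /\<^sub>R norm (K x))) (at q) v =
     \<sigma> *\<^sub>R (inverse (norm (G q)) *\<^sub>R G' v
        + (- (inverse (norm (G q)) * (sgn (G q) \<bullet> G' v) * inverse (norm (G q)))) *\<^sub>R G q)"
    unfolding frechet_derivative_at[OF d, symmetric] by (rule refl)
  then show ?thesis using v by (simp add: inner_add_left inner_diff_left divide_inverse_commute)
qed

lemma phi_convex: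
  fixes a b y y' :: "real^3"
  assumes "0 \<le> u" "u \<le> 1"
  shows "phi ((1 - u) *\<^sub>R a + u *\<^sub>R b) y y' \<le> (1 - u) * phi a y y' + u * phi b y y'"
proof -
  have 1: "norm (y - ((1 - u) *\<^sub>R a + u *\<^sub>R b)) \<le> (1 - u) * norm (y - a) + u * norm (y - b)"
  proof -
    have "y - ((1 - u) *\<^sub>R a + u *\<^sub>R b) = (1 - u) *\<^sub>R (y - a) + u *\<^sub>R (y - b)"
      by (simp add: algebra_simps)
    then show ?thesis using norm_triangle_ineq[of "(1 - u) *\<^sub>R (y - a)" "u *\<^sub>R (y - b)"] assms
      by simp
  qed
  have 2: "norm (((1 - u) *\<^sub>R a + u *\<^sub>R b) - y') \<le> (1 - u) * norm (a - y') + u * norm (b - y')"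
  proof -
    have "((1 - u) *\<^sub>R a + u *\<^sub>R b) - y' = (1 - u) *\<^sub>R (a - y') + u *\<^sub>R (b - y')"
      by (simp add: algebra_simps)
    then show ?thesis using norm_triangle_ineq[of "(1 - u) *\<^sub>R (a - y')" "u *\<^sub>R (b - y')"] assms
      by simp
  qed
  show ?thesis using 1 2 unfolding phi_def by (simp add: algebra_simps)
qed

lemma phi_seg_lt:
  fixes a b z y y' :: "real^3"
  assumes "z \<in> closed_segment a b" "phi a y y' < c" "phi b y y' < c"
  shows "phi z y y' < c"
proof -
  obtain u where u: "0 \<le> u" "u \<le> 1" "z = (1 - u) *\<^sub>R a + u *\<^sub>R b"
    using assms(1) unfolding closed_segment_def by auto
  have "phi z y y' \<le> (1 - u) * phi a y y' + u * phi b y y'" using phi_convex[OF u(1,2)] u(3) by simp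
  also have "\<dots> < c"
  proof (cases "u = 0")
    case True then show ?thesis using assms by simp
  next
    case False
    have "(1 - u) * phi a y y' \<le> (1 - u) * c" using u assms by (intro mult_left_mono) auto
    moreover have "u * phi b y y' < u * c" using u False assms by (intro mult_strict_left_mono) auto
    ultimately show ?thesis by (simp add: algebra_simps)
  qed
  finally show ?thesis .
qed

lemma phi_seg_strict:
  fixes a b z y y' :: "real^3"
  assumes "z \<in> closed_segment a b" "z \<noteq> a" "phi b y y' < phi a y y'"
  shows "phi z y y' < phi a y y'"
proof -
  obtain u where u: "0 \<le> u" "u \<le> 1" "z = (1 - u) *\<^sub>R a + u *\<^sub>R b"
    using assms(1) unfolding closed_segment_def by auto
  have "u \<noteq> 0" using u assms(2) by auto
  have "phi z y y' \<le> (1 - u) * phi a y y' + u * phi b y y'" using phi_convex[OF u(1,2)] u(3) by simp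
  also have "\<dots> < phi a y y'"
  proof -
    have "u * phi b y y' < u * phi a y y'" using u \<open>u \<noteq> 0\<close> assms by (intro mult_strict_left_mono) auto
    then show ?thesis by (simp add: algebra_simps)
  qed
  finally show ?thesis .
qed




lemma part1:
  fixes D :: "(real^3) set" and p p' q :: "real^3" and \<eta>' s c :: real
  assumes "p \<notin> closure D" "closed_segment p p' \<inter> closure D = {}"
    and "cball p' \<eta>' \<inter> closure D = {}"
    and c_def: "c = (INF x\<in>frontier D. phi x p p')"
    and "0 < s" and "s < \<eta>'"
    and "q \<in> Lambda D p p'"
  shows "Lambda D p (p' + s *\<^sub>R ((q - p') /\<^sub>R norm (q - p'))) = {q}"
    and "c = phi q p p'" and "norm (q - p') > s" and "c > norm (p - p')"
    and "\<And>x. x \<in> D \<Longrightarrow> phi x p p' \<ge> c"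
    and "q \<notin> closed_segment p p'" and "q \<noteq> p"
proof -
  have fr: "q \<in> frontier D" and mn: "\<And>x. x \<in> frontier D \<Longrightarrow> phi q p p' \<le> phi x p p'"
    using assms(7) unfolding Lambda_def by auto
  show cq: "c = phi q p p'" unfolding c_def
    by (rule cInf_eq_minimum) (use fr mn in auto)
  have qcl: "q \<in> closure D" using fr by (simp add: frontier_def)
  have "q \<notin> cball p' \<eta>'" using qcl assms(3) by blast
  then have r1: "norm (q - p') > \<eta>'" by (simp add: dist_norm norm_minus_commute)
  then show r1s: "norm (q - p') > s" using assms(6) by simp
  show qseg: "q \<notin> closed_segment p p'" using qcl assms(2) by blast
  show qp: "q \<noteq> p" using qcl assms(1) by blast
  have "dist p p' \<le> dist p q + dist q p'" by (rule dist_triangle)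
  moreover have "dist p p' \<noteq> dist p q + dist q p'"
    using qseg between[of p p' q] between_mem_segment by auto
  ultimately show cgt: "c > norm (p - p')" unfolding cq phi_def by (simp add: dist_norm)
  show F6: "\<And>x. x \<in> D \<Longrightarrow> phi x p p' \<ge> c"
  proof (rule ccontr)
    fix x assume xD: "x \<in> D" and "\<not> c \<le> phi x p p'"
    then have lt: "phi x p p' < c" by simp
    have "closed_segment p x \<inter> frontier D \<noteq> {}"
      by (rule connected_Int_frontier) (use xD assms(1) closure_subset in auto)
    then obtain y where y: "y \<in> closed_segment p x" "y \<in> frontier D" by blast
    have "phi p p p' < c" using cgt by (simp add: phi_def)
    then have "phi y p p' < c" using phi_seg_lt[OF y(1) _ lt] by simp
    moreover have "phi y p p' \<ge> c" using mn[OF y(2)] cq by simp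
    ultimately show False by simp
  qed
  define r where "r = norm (q - p')"
  define A where "A = (q - p') /\<^sub>R r"
  define p2 where "p2 = p' + s *\<^sub>R A"
  have rpos: "r > 0" using r1s assms(5) r_def by linarith
  have qA: "q - p' = r *\<^sub>R A" using rpos by (simp add: A_def)
  have nA: "norm A = 1" using rpos by (simp add: A_def r_def)
  have qp2: "q - p2 = (r - s) *\<^sub>R A" using qA by (simp add: p2_def algebra_simps)
  have nqp2: "norm (q - p2) = r - s" using qp2 nA r1s r_def by simp
  have phq: "phi q p p2 = c - s" using nqp2 cq unfolding phi_def r_def by simp
  have low: "phi x p p2 \<ge> phi x p p' - s" for x
  proof -
    have "norm (x - p') \<le> norm (x - p2) + norm (p2 - p')"
      using norm_triangle_ineq[of "x - p2" "p2 - p'"] by simp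
    moreover have "norm (p2 - p') = s" using nA assms(5) by (simp add: p2_def)
    ultimately show ?thesis unfolding phi_def by simp
  qed
  have "p' + s *\<^sub>R ((q - p') /\<^sub>R norm (q - p')) = p2" by (simp add: p2_def A_def r_def)
  moreover have "Lambda D p p2 = {q}"
  proof
    show "{q} \<subseteq> Lambda D p p2"
      using fr mn low phq cq unfolding Lambda_def by (auto intro: order_trans[OF _ low])
  next
    show "Lambda D p p2 \<subseteq> {q}"
    proof
      fix x assume "x \<in> Lambda D p p2"
      then have xf: "x \<in> frontier D" and xle: "phi x p p2 \<le> phi q p p2"
        unfolding Lambda_def using fr by auto
      have xge: "phi x p p' \<ge> c" using mn[OF xf] cq by simp
      have phx: "phi x p p' = c" using xle xge low[of x] phq by simp
      have eqn: "norm (x - p2) = norm (x - p') - s" using xle xge low[of x] phq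
        unfolding phi_def by simp
      have "dist x p' = dist x p2 + dist p2 p'"
        using eqn nA assms(5) by (simp add: dist_norm p2_def)
      then have "norm (x - p2) *\<^sub>R (p2 - p') = norm (p2 - p') *\<^sub>R (x - p2)"
        using dist_triangle_eq by blast
      then have "norm (x - p2) *\<^sub>R (s *\<^sub>R A) = s *\<^sub>R (x - p2)"
        using nA assms(5) by (simp add: p2_def)
      then have "s *\<^sub>R (norm (x - p2) *\<^sub>R A) = s *\<^sub>R (x - p2)" by (simp add: algebra_simps)
      then have xp2: "x - p2 = norm (x - p2) *\<^sub>R A" using assms(5) scaleR_cancel_left[of s "norm (x - p2) *\<^sub>R A" "x - p2"] by simp
      define \<mu> where "\<mu> = norm (x - p')"
      have "x - p' = (x - p2) + s *\<^sub>R A" by (simp add: p2_def)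
      also have "\<dots> = (norm (x - p2) + s) *\<^sub>R A" using xp2 by (simp add: scaleR_add_left)
      also have "norm (x - p2) + s = \<mu>" using eqn \<mu>_def by simp
      finally have xA: "x - p' = \<mu> *\<^sub>R A" .
      have xq: "x - q = (\<mu> - r) *\<^sub>R A" using xA qA by (simp add: algebra_simps)
      have ph1: "\<mu> + norm (p - x) = c" using phx by (simp add: phi_def \<mu>_def add.commute)
      have ph2: "r + norm (p - q) = c" using cq by (simp add: phi_def r_def add.commute)
      have "phi p p p' < c" using cgt by (simp add: phi_def)
      consider "\<mu> < r" | "\<mu> = r" | "\<mu> > r" by linarith
      then show "x \<in> {q}"
      proof cases
        case 1
        have nxq: "norm (x - q) = r - \<mu>" using xq nA 1 by simp
        have "dist x p = dist x q + dist q p"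
          using ph1 ph2 nxq by (simp add: dist_norm norm_minus_commute)
        then have qs: "q \<in> closed_segment x p" using between[of x p q] between_mem_segment by metis
        have qx: "q \<noteq> x" using xq 1 nA by auto
        have "phi p p p' < phi x p p'" using \<open>phi p p p' < c\<close> phx by simp
        then have "phi q p p' < phi x p p'" using phi_seg_strict[OF qs qx] by blast
        then show ?thesis using phx cq by simp
      next
        case 2 then show ?thesis using xq by simp
      next
        case 3
        have nxq: "norm (q - x) = \<mu> - r" using xq nA 3
          by (simp add: norm_minus_commute[of q x])
        have "dist q p = dist q x + dist x p"
          using ph1 ph2 nxq by (simp add: dist_norm norm_minus_commute)
        then have xs: "x \<in> closed_segment q p" using between[of q p x] between_mem_segment by metis
        have xqn: "x \<noteq> q" using xq 3 nA by auto
        have "phi p p p' < phi q p p'" using \<open>phi p p p' < c\<close> cq by simp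
        then have "phi x p p' < phi q p p'" using phi_seg_strict[OF xs xqn] by blast
        then show ?thesis using phx cq by simp
      qed
    qed
  qed
  ultimately show "Lambda D p (p' + s *\<^sub>R ((q - p') /\<^sub>R norm (q - p'))) = {q}" by simp
qed




theorem proposition5p2:
  fixes D :: "(real^3) set" and p p' q :: "real^3" and \<eta>' s c :: real
  assumes "D \<noteq> {}" and "bounded D" and "open D" and "C2_boundary D"
    and "p \<notin> closure D" and "p' \<notin> closure D"
    and "closed_segment p p' \<inter> closure D = {}"
    and "\<eta>' > 0" and "cball p' \<eta>' \<inter> closure D = {}"
    and c_def: "c = (INF x\<in>frontier D. phi x p p')"
    and "0 < s" and "s < \<eta>'"
    and "q \<in> Lambda D p p'"
  shows "Lambda D p (p' + s *\<^sub>R ((q - p') /\<^sub>R norm (q - p'))) = {q}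
       \<and> (s < (c - norm (p - p')) / 2 \<longrightarrow>
          (\<forall>U \<rho>. local_defining_function D q U \<rho> \<longrightarrow>
             (let F = (\<lambda>x. phi x p (p' + s *\<^sub>R ((q - p') /\<^sub>R norm (q - p'))));
                  \<nu> = outward_normal \<rho> q
              in tangent_plane \<rho> q = tangent_plane F q
                 \<and> tangent_plane F q = tangent_plane (\<lambda>x. phi x p p') q
                 \<and> (\<forall>v\<in>tangent_plane \<rho> q. v \<noteq> 0 \<longrightarrow>
                      (shape_operator F \<nu> q v - shape_operator \<rho> \<nu> q v) \<bullet> v > 0))))"
proof -
  note P = part1[OF assms(5,7,9) c_def assms(11,12,13)]
  have fr: "q \<in> frontier D" using assms(13) unfolding Lambda_def by auto
  define r where "r = norm (q - p')"
  define A where "A = (q - p') /\<^sub>R r"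
  define p2 where "p2 = p' + s *\<^sub>R A"
  have p2e: "p' + s *\<^sub>R ((q - p') /\<^sub>R norm (q - p')) = p2" by (simp add: p2_def A_def r_def)
  have rs: "r > s" using P(3) r_def by simp
  have rpos: "r > 0" using rs assms(11) by linarith
  have qA: "q - p' = r *\<^sub>R A" using rpos by (simp add: A_def)
  have nA: "norm A = 1" using rpos by (simp add: A_def r_def)
  have qp2: "q - p2 = (r - s) *\<^sub>R A" using qA by (simp add: p2_def algebra_simps)
  have nqp2: "norm (q - p2) = r - s" using qp2 nA rs by simp
  have qp': "q \<noteq> p'" using rpos r_def by auto
  have qp2n: "q \<noteq> p2" using nqp2 rs by auto
  have qp: "q \<noteq> p" by (rule P(7))
  define Gp where "Gp x = (x - p) /\<^sub>R norm (x - p) + (x - p') /\<^sub>R norm (x - p')" for x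
  define GF where "GF x = (x - p) /\<^sub>R norm (x - p) + (x - p2) /\<^sub>R norm (x - p2)" for x
  define b where "b = Gp q"
  have GFq: "GF q = b"
  proof -
    have "(q - p2) /\<^sub>R norm (q - p2) = A" using qp2 nqp2 rs by simp
    moreover have "(q - p') /\<^sub>R norm (q - p') = A" by (simp add: A_def r_def)
    ultimately show ?thesis by (simp add: GF_def b_def Gp_def)
  qed
  have bnz: "b \<noteq> 0"
  proof
    assume b0: "b = 0"
    define rp where "rp = norm (q - p)"
    have rpp: "rp > 0" using qp rp_def by simp
    have "(rp * r) *\<^sub>R b = r *\<^sub>R (q - p) + rp *\<^sub>R (q - p')"
    proof -
      have c1: "rp * r * inverse rp = r" "rp * r * inverse r = rp" using rpp rpos by auto
      have "(rp * r) *\<^sub>R b = (rp * r * inverse rp) *\<^sub>R (q - p) + (rp * r * inverse r) *\<^sub>R (q - p')"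
        by (simp add: b_def Gp_def scaleR_add_right flip: rp_def r_def)
      also have "\<dots> = r *\<^sub>R (q - p) + rp *\<^sub>R (q - p')" by (simp only: c1)
      finally show ?thesis .
    qed
    then have e: "r *\<^sub>R (q - p) + rp *\<^sub>R (q - p') = 0" using b0 by simp
    define u where "u = rp / (rp + r)"
    have "(rp + r) *\<^sub>R q = r *\<^sub>R p + rp *\<^sub>R p'" using e by (simp add: algebra_simps)
    then have "q = (1 - u) *\<^sub>R p + u *\<^sub>R p'"
    proof -
      assume h: "(rp + r) *\<^sub>R q = r *\<^sub>R p + rp *\<^sub>R p'"
      have "q = inverse (rp + r) *\<^sub>R ((rp + r) *\<^sub>R q)" using rpp rpos by simp
      also have "\<dots> = (r / (rp + r)) *\<^sub>R p + (rp / (rp + r)) *\<^sub>R p'"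
        unfolding h by (simp add: scaleR_add_right divide_inverse_commute)
      also have "r / (rp + r) = 1 - u" using rpp rpos by (simp add: u_def field_simps)
      finally show ?thesis by (simp add: u_def)
    qed
    moreover have "0 \<le> u" "u \<le> 1" using rpp rpos by (auto simp: u_def)
    ultimately have "q \<in> closed_segment p p'" unfolding closed_segment_def by blast
    then show False using P(6) by simp
  qed
  let ?V = "- {p, p'}" let ?V2 = "- {p, p2}"
  have oV: "open ?V" "open ?V2" by (auto intro!: open_Compl finite_imp_closed)
  have qV: "q \<in> ?V" "q \<in> ?V2" using qp qp' qp2n by auto
  have dPhi: "\<forall>x\<in>?V. ((\<lambda>x. phi x p p') has_derivative (\<lambda>h. Gp x \<bullet> h)) (at x)"
    unfolding Gp_def using phi_deriv by auto
  have dF: "\<forall>x\<in>?V2. ((\<lambda>x. phi x p p2) has_derivative (\<lambda>h. GF x \<bullet> h)) (at x)"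
    unfolding GF_def using phi_deriv by auto
  have dGp: "(Gp has_derivative (\<lambda>h. nd p q h + nd p' q h)) (at q)"
    unfolding Gp_def[abs_def] using ngrad_deriv[OF qp qp'] .
  have dGF: "(GF has_derivative (\<lambda>h. nd p q h + nd p2 q h)) (at q)"
    unfolding GF_def[abs_def] using ngrad_deriv[OF qp qp2n] .
  have gradPhi: "grad (\<lambda>x. phi x p p') q = b" using grad_eq dPhi qV b_def by blast
  have gradF: "grad (\<lambda>x. phi x p p2) q = b" using grad_eq dF qV GFq by metis
  have gradFx: "\<forall>x\<in>?V2. grad (\<lambda>x. phi x p p2) x = GF x" using grad_eq dF by blast
  have "c = phi q p p'" by (rule P(2))
  show ?thesis
  proof (intro conjI impI allI)
    show "Lambda D p (p' + s *\<^sub>R ((q - p') /\<^sub>R norm (q - p'))) = {q}" by (rule P(1))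
  next
    fix U \<rho> assume ldf: "local_defining_function D q U \<rho>"
    then have oU: "open U" and qU: "q \<in> U" and C2: "C2_on U \<rho>"
      and gnz: "\<forall>x\<in>U. grad \<rho> x \<noteq> 0" and DU: "D \<inter> U = {x\<in>U. \<rho> x < 0}"
      and FU: "frontier D \<inter> U = {x\<in>U. \<rho> x = 0}"
      unfolding local_defining_function_def by auto
    obtain g H where gH: "\<forall>x\<in>U. (\<rho> has_derivative (\<lambda>h. g x \<bullet> h)) (at x) \<and>
                                 (g has_derivative (\<lambda>h. H x *v h)) (at x)"
      using C2 unfolding C2_on_def by blast
    have d\<rho>: "\<forall>x\<in>U. (\<rho> has_derivative (\<lambda>h. g x \<bullet> h)) (at x)" using gH by blast
    have dg: "(g has_derivative (\<lambda>h. H q *v h)) (at q)" using gH qU by blast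
    have grad\<rho>x: "\<forall>x\<in>U. grad \<rho> x = g x" using grad_eq d\<rho> by blast
    define a where "a = g q"
    have grad\<rho>: "grad \<rho> q = a" using grad\<rho>x qU a_def by simp
    have anz: "a \<noteq> 0" using gnz qU grad\<rho> by auto
    have \<rho>q: "\<rho> q = 0" using FU fr qU by auto
    have K: False if "x \<in> U" "\<rho> x < \<rho> q" "phi x p p' < phi q p p'" for x
    proof -
      have "x \<in> D" using DU that \<rho>q by auto
      then show False using P(5)[of x] that P(2) by simp
    qed
    have ab: "a \<bullet> b = - (norm a * norm b)"
    proof (rule ccontr)
      assume ne: "a \<bullet> b \<noteq> - (norm a * norm b)"
      have "\<bar>a \<bullet> b\<bar> \<le> norm a * norm b" by (rule Cauchy_Schwarz_ineq2)
      then have gt: "a \<bullet> b > - (norm a * norm b)" using ne by linarith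
      define w where "w = - (a /\<^sub>R norm a + b /\<^sub>R norm b)"
      have na: "norm a > 0" "norm b > 0" using anz bnz by auto
      have aw: "a \<bullet> w = - norm a - (a \<bullet> b) / norm b"
        using anz bnz unfolding w_def
        apply (simp add: inner_add_right inner_diff_right inner_minus_right divide_inverse_commute)
        apply (simp add: dot_square_norm power2_eq_square)
        done
      have bw: "b \<bullet> w = - (a \<bullet> b) / norm a - norm b"
        using anz bnz unfolding w_def
        apply (simp add: inner_add_right inner_diff_right inner_minus_right divide_inverse_commute inner_commute[of b a])
        apply (simp add: dot_square_norm power2_eq_square)
        done
      have "(a \<bullet> b) / norm b > - norm a" using gt na by (simp add: field_simps)
      then have aw': "a \<bullet> w < 0" using aw by simp
      have "(a \<bullet> b) / norm a > - norm b" using gt na by (simp add: field_simps)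
      then have bw': "b \<bullet> w < 0" using bw by simp
      obtain d1 where d1: "d1 > 0" "\<And>t. 0 < t \<and> t < d1 \<Longrightarrow> q + t *\<^sub>R 0 + (t\<^sup>2 * 1) *\<^sub>R w \<in> U
            \<and> \<rho> (q + t *\<^sub>R 0 + (t\<^sup>2 * 1) *\<^sub>R w) < \<rho> q"
        using curve_decrease[OF oU qU d\<rho> dg, of 0 1 w] aw' a_def by auto
      obtain d2 where d2: "d2 > 0" "\<And>t. 0 < t \<and> t < d2 \<Longrightarrow> q + t *\<^sub>R 0 + (t\<^sup>2 * 1) *\<^sub>R w \<in> ?V
            \<and> phi (q + t *\<^sub>R 0 + (t\<^sup>2 * 1) *\<^sub>R w) p p' < phi q p p'"
        using curve_decrease[OF oV(1) qV(1) dPhi dGp, of 0 1 w] bw' b_def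
        by (auto simp: linear_simps)
      define t where "t = min d1 d2 / 2"
      have "0 < t \<and> t < d1" "0 < t \<and> t < d2" using d1 d2 by (auto simp: t_def)
      then show False using d1(2) d2(2) K by blast
    qed
    define lam where "lam = norm a / norm b"
    have lpos: "lam > 0" using anz bnz by (simp add: lam_def)
    have aeq: "a = - lam *\<^sub>R b"
    proof -
      have na: "norm a > 0" "norm b > 0" using anz bnz by auto
      define ea where "ea = a /\<^sub>R norm a"
      define eb where "eb = b /\<^sub>R norm b"
      have "norm ea = 1" "norm eb = 1" using na by (auto simp: ea_def eb_def)
      then have e1: "ea \<bullet> ea = 1" "eb \<bullet> eb = 1" by (metis power2_norm_eq_inner one_power2)+
      have e2: "ea \<bullet> eb = -1" using ab na by (simp add: ea_def eb_def field_simps)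
      have "(ea + eb) \<bullet> (ea + eb) = 0"
        using e1 e2 by (simp add: inner_add_left inner_add_right inner_commute[of eb ea])
      then have "ea = - eb" by (simp add: add_eq_0_iff)
      then have "norm a *\<^sub>R ea = norm a *\<^sub>R (- eb)" by simp
      then show ?thesis using na by (simp add: lam_def ea_def eb_def divide_inverse_commute mult.commute)
    qed
    have tan_eq: "a \<bullet> v = 0 \<longleftrightarrow> b \<bullet> v = 0" for v
      using aeq lpos by simp
    have TP1: "tangent_plane \<rho> q = tangent_plane (\<lambda>x. phi x p p2) q"
      unfolding tangent_plane_def grad\<rho> gradF using tan_eq by blast
    have TP2: "tangent_plane (\<lambda>x. phi x p p2) q = tangent_plane (\<lambda>x. phi x p p') q"
      unfolding tangent_plane_def gradPhi gradF by simp
    have SO: "(H q *v v) \<bullet> v + lam * ((nd p q v + nd p' q v) \<bullet> v) \<ge> 0" if bv: "b \<bullet> v = 0" for v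
    proof (rule ccontr)
      assume "\<not> ?thesis"
      then have neg: "(H q *v v) \<bullet> v + lam * ((nd p q v + nd p' q v) \<bullet> v) < 0" by simp
      define X where "X = (nd p q v + nd p' q v) \<bullet> v / 2"
      define Y where "Y = (H q *v v) \<bullet> v / 2"
      define B where "B = b \<bullet> b"
      have Bp: "B > 0" using bnz by (simp add: B_def)
      define k where "k = (Y / lam - X) / (2 * B)"
      have kB: "k * B = (Y / lam - X) / 2" using Bp by (simp add: k_def)
      have av: "a \<bullet> v = 0" using tan_eq bv by simp
      have ab2: "a \<bullet> b = - lam * B" using aeq by (simp add: B_def)
      have YX: "Y + lam * X < 0" using neg by (simp add: X_def Y_def)
      have c1: "(H q *v v) \<bullet> v + 2 * k * (g q \<bullet> b) < 0"
      proof -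
        have "(H q *v v) \<bullet> v + 2 * k * (g q \<bullet> b) = 2 * Y - 2 * lam * (k * B)"
          using ab2 a_def by (simp add: Y_def algebra_simps)
        also have "\<dots> = Y + lam * X" using lpos unfolding kB by (simp add: field_simps)
        finally show ?thesis using YX by simp
      qed
      have c2: "(nd p q v + nd p' q v) \<bullet> v + 2 * k * (Gp q \<bullet> b) < 0"
      proof -
        have "(nd p q v + nd p' q v) \<bullet> v + 2 * k * (Gp q \<bullet> b) = 2 * X + 2 * (k * B)"
          by (simp add: X_def B_def b_def algebra_simps)
        also have "\<dots> = (Y + lam * X) / lam" using lpos unfolding kB by (simp add: field_simps)
        finally show ?thesis using YX lpos by (simp add: divide_neg_pos)
      qed
      obtain d1 where d1: "d1 > 0" "\<And>t. 0 < t \<and> t < d1 \<Longrightarrow> q + t *\<^sub>R v + (t\<^sup>2 * k) *\<^sub>R b \<in> U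
            \<and> \<rho> (q + t *\<^sub>R v + (t\<^sup>2 * k) *\<^sub>R b) < \<rho> q"
        using curve_decrease[OF oU qU d\<rho> dg, of v k b] c1 av a_def by auto
      obtain d2 where d2: "d2 > 0" "\<And>t. 0 < t \<and> t < d2 \<Longrightarrow> q + t *\<^sub>R v + (t\<^sup>2 * k) *\<^sub>R b \<in> ?V
            \<and> phi (q + t *\<^sub>R v + (t\<^sup>2 * k) *\<^sub>R b) p p' < phi q p p'"
        using curve_decrease[OF oV(1) qV(1) dPhi dGp, of v k b] c2 bv b_def by auto
      define t where "t = min d1 d2 / 2"
      have "0 < t \<and> t < d1" "0 < t \<and> t < d2" using d1 d2 by (auto simp: t_def)
      then show False using d1(2) d2(2) K by blast
    qed
    show "let F = (\<lambda>x. phi x p (p' + s *\<^sub>R ((q - p') /\<^sub>R norm (q - p'))));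
                  \<nu> = outward_normal \<rho> q
              in tangent_plane \<rho> q = tangent_plane F q
                 \<and> tangent_plane F q = tangent_plane (\<lambda>x. phi x p p') q
                 \<and> (\<forall>v\<in>tangent_plane \<rho> q. v \<noteq> 0 \<longrightarrow>
                      (shape_operator F \<nu> q v - shape_operator \<rho> \<nu> q v) \<bullet> v > 0)"
      unfolding p2e Let_def
    proof (intro conjI TP1 TP2 ballI impI)
      fix v assume vT: "v \<in> tangent_plane \<rho> q" and v0: "v \<noteq> 0"
      have av: "a \<bullet> v = 0" using vT grad\<rho> by (simp add: tangent_plane_def)
      have bv: "b \<bullet> v = 0" using av tan_eq by simp
      define \<nu> where "\<nu> = outward_normal \<rho> q"
      have nu: "\<nu> = a /\<^sub>R norm a" by (simp add: \<nu>_def outward_normal_def grad\<rho>)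
      have na: "norm a > 0" "norm b > 0" using anz bnz by auto
      have sF: "sgn (grad (\<lambda>x. phi x p p2) q \<bullet> \<nu>) = -1"
      proof -
        have "b \<bullet> \<nu> = (a \<bullet> b) / norm a" using nu by (simp add: inner_commute divide_inverse_commute)
        also have "\<dots> = - norm b" using ab na by simp
        finally have "b \<bullet> \<nu> < 0" using na by simp
        then show ?thesis using gradF by simp
      qed
      have s\<rho>: "sgn (grad \<rho> q \<bullet> \<nu>) = 1"
      proof -
        have "a \<bullet> \<nu> = norm a" using nu na by (simp add: dot_square_norm power2_eq_square)
        then show ?thesis using grad\<rho> na by simp
      qed
      have SF: "shape_operator (\<lambda>x. phi x p p2) \<nu> q v \<bullet> v = ((nd p q v + nd p2 q v) \<bullet> v) / norm b"
      proof -
        have "frechet_derivative (\<lambda>x. (-1::real) *\<^sub>R (grad (\<lambda>x. phi x p p2) x /\<^sub>R norm (grad (\<lambda>x. phi x p p2) x))) (at q) v \<bullet> v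
            = -1 * ((nd p q v + nd p2 q v) \<bullet> v) / norm (GF q)"
          by (rule normalized_deriv_inner'[OF dGF]) (use GFq bnz bv oV qV gradFx in auto)
        then show ?thesis unfolding shape_operator_def sF using GFq by simp
      qed
      have S\<rho>: "shape_operator \<rho> \<nu> q v \<bullet> v = - ((H q *v v) \<bullet> v) / norm a"
      proof -
        have "frechet_derivative (\<lambda>x. (1::real) *\<^sub>R (grad \<rho> x /\<^sub>R norm (grad \<rho> x))) (at q) v \<bullet> v
            = 1 * ((H q *v v) \<bullet> v) / norm (g q)"
          by (rule normalized_deriv_inner'[OF dg]) (use anz a_def av oU qU grad\<rho>x in auto)
        then show ?thesis unfolding shape_operator_def s\<rho> using a_def by simp
      qed
      have HF: "(nd p q v + nd p2 q v) \<bullet> v > (nd p q v + nd p' q v) \<bullet> v"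
      proof -
        have e1: "nd p2 q v \<bullet> v = (v \<bullet> v - (A \<bullet> v)\<^sup>2) / (r - s)"
          by (rule nd_inner) (use rs qp2 nA in auto)
        have e2: "nd p' q v \<bullet> v = (v \<bullet> v - (A \<bullet> v)\<^sup>2) / r"
          by (rule nd_inner) (use rpos qA nA in auto)
        have pos: "v \<bullet> v - (A \<bullet> v)\<^sup>2 > 0"
        proof -
          have AA: "A \<bullet> A = 1" using nA by (metis power2_norm_eq_inner one_power2)
          have "(norm (v - (A \<bullet> v) *\<^sub>R A))\<^sup>2 = v \<bullet> v - (A \<bullet> v)\<^sup>2"
            unfolding power2_norm_eq_inner
            by (simp add: inner_diff_left inner_diff_right inner_commute[of v A] AA power2_eq_square)
          moreover have "v - (A \<bullet> v) *\<^sub>R A \<noteq> 0"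
          proof
            assume h: "v - (A \<bullet> v) *\<^sub>R A = 0"
            then have vA: "v = (A \<bullet> v) *\<^sub>R A" by simp
            then have "A \<bullet> v \<noteq> 0" using v0 by auto
            moreover have "(A \<bullet> v) * (b \<bullet> A) = 0" using bv vA by (metis inner_scaleR_right mult.commute)
            ultimately have bA: "b \<bullet> A = 0" by simp
            define np where "np = (q - p) /\<^sub>R norm (q - p)"
            have nnp: "norm np = 1" using qp by (simp add: np_def)
            have bdef: "b = np + A" by (simp add: b_def Gp_def np_def A_def r_def)
            have "np \<bullet> A = -1" using bA nA by (simp add: bdef inner_add_left dot_square_norm)
            moreover have "np \<bullet> np = 1" "A \<bullet> A = 1" using nnp nA by (metis power2_norm_eq_inner one_power2)+
            ultimately have "b \<bullet> b = 0"
              by (simp add: bdef inner_add_left inner_add_right inner_commute[of A np])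
            then show False using bnz by simp
          qed
          ultimately show ?thesis
            by (metis zero_less_norm_iff zero_less_power diff_gt_0_iff_gt)
        qed
        have "(v \<bullet> v - (A \<bullet> v)\<^sup>2) / r < (v \<bullet> v - (A \<bullet> v)\<^sup>2) / (r - s)"
          using pos rs assms(11) by (intro divide_strict_left_mono) auto
        then show ?thesis using e1 e2 by (simp add: inner_add_left)
      qed
      have so: "(H q *v v) \<bullet> v + lam * ((nd p q v + nd p' q v) \<bullet> v) \<ge> 0" using SO bv .
      have "(H q *v v) \<bullet> v / norm a + ((nd p q v + nd p' q v) \<bullet> v) / norm b \<ge> 0"
      proof -
        have "((H q *v v) \<bullet> v + lam * ((nd p q v + nd p' q v) \<bullet> v)) / norm a \<ge> 0"
          using so na by simp
        then show ?thesis using na by (simp add: lam_def add_divide_distrib)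
      qed
      moreover have "((nd p q v + nd p2 q v) \<bullet> v) / norm b > ((nd p q v + nd p' q v) \<bullet> v) / norm b"
        using HF na by (simp add: divide_strict_right_mono)
      ultimately show "0 < (shape_operator (\<lambda>x. phi x p p2) \<nu> q v - shape_operator \<rho> \<nu> q v) \<bullet> v"
        using SF S\<rho> by (simp add: inner_diff_left)
    qed
  qed
qed


end
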